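(* Let $\tau$ be a type and let $X$ be a finite set of ordinals. There is a construction scheme over $X$ of type $\tau$ if and only if $|X|=m_k$ for some $k\in\omega$. Moreover, if there is a construction scheme over $X$ of type $\tau$, it is unique.
   Context: A type is a sequence $\tau=\{(m_k,n_{k+1},r_{k+1})\}_{k\in\omega}$ of natural numbers with $m_0=1$; $n_k\ge2$ for $k\ge1$; every $r\in\omega$ equals $r_k$ for infinitely many $k$; $m_k>r_{k+1}$; and $m_{k+1}=r_{k+1}+(m_k-r_{k+1})n_{k+1}$ for all $k$. For a set of ordinals $X$ and $\mathcal F\subseteq[X]^{<\omega}$, $\mathcal F_k$ is the set of elements of rank $k$ in the well-founded order $(\mathcal F,\subsetneq)$; $A\sqsubseteq B$ means $A\subseteq B$ and every element of $B$ below an element of $A$ is in $A$; $A<B$ means every element of $A$ is below every element of $B$. $\mathcal F$ is a construction scheme over $X$ of type $\tau$ if (1) every finite subset of $X$ lies in a member of $\mathcal F$; (2) $|F|=m_k$ for $F\in\mathcal F_k$; (3) $E\cap F\sqsubseteq E$ and $E\cap F\sqsubseteq F$ for $E,F\in\mathcal F_k$; (4) each $F\in\mathcal F_{k+1}$ is the union of uniquely determined $F_0,\dots,F_{n_{k+1}-1}\in\mathcal F_k$ forming a $\Delta$-system with root $R(F)$, $|R(F)|=r_{k+1}$, and $R(F)<F_0\setminus R(F)<\dots<F_{n_{k+1}-1}\setminus R(F)$. *)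

theory Defs
  imports Main
begin

text \<open>A type tau = ((m k, n (k+1), r (k+1)))_k is given by three sequences m n r :: nat => nat;
  the values n 0 and r 0 are irrelevant.\<close>

definition is_type :: "(nat \<Rightarrow> nat) \<Rightarrow> (nat \<Rightarrow> nat) \<Rightarrow> (nat \<Rightarrow> nat) \<Rightarrow> bool" where
  "is_type m n r \<longleftrightarrow>
     m 0 = 1 \<and>
     (\<forall>k\<ge>1. n k \<ge> 2) \<and>
     (\<forall>x. infinite {k. k \<ge> 1 \<and> r k = x}) \<and>
     (\<forall>k. m k > r (Suc k)) \<and>
     (\<forall>k. m (Suc k) = r (Suc k) + (m k - r (Suc k)) * n (Suc k))"

text \<open>rank F A = sup { rank F B + 1 : B in F, B proper subset of A } (0 if empty);
  all members of F are finite, so ranks are natural numbers.\<close>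

function fsrank :: "'a set set \<Rightarrow> 'a set \<Rightarrow> nat" where
  "fsrank F A =
     (if finite A then Sup ((\<lambda>B. Suc (fsrank F B)) ` {B. B \<in> F \<and> B \<subset> A}) else 0)"
  by auto
termination
  by (relation "measure (\<lambda>(F, A). card A)") (auto intro: psubset_card_mono)

definition level :: "'a set set \<Rightarrow> nat \<Rightarrow> 'a set set" where
  "level F k = {A \<in> F. fsrank F A = k}"

definition init_seg :: "'a::linorder set \<Rightarrow> 'a set \<Rightarrow> bool" (infix "\<sqsubseteq>" 50) where
  "A \<sqsubseteq> B \<longleftrightarrow> A \<subseteq> B \<and> (\<forall>b\<in>B. \<forall>a\<in>A. b < a \<longrightarrow> b \<in> A)"

definition set_less :: "'a::linorder set \<Rightarrow> 'a set \<Rightarrow> bool" (infix "<\<^sub>s" 50) where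
  "A <\<^sub>s B \<longleftrightarrow> (\<forall>a\<in>A. \<forall>b\<in>B. a < b)"

definition is_decomposition ::
  "'a::linorder set set \<Rightarrow> nat \<Rightarrow> (nat \<Rightarrow> nat) \<Rightarrow> (nat \<Rightarrow> nat) \<Rightarrow> 'a set \<Rightarrow> (nat \<Rightarrow> 'a set) \<Rightarrow> bool" where
  "is_decomposition F k n r A G \<longleftrightarrow>
     (\<forall>i<n (Suc k). G i \<in> level F k) \<and>
     A = (\<Union>i<n (Suc k). G i) \<and>
     (\<exists>R. card R = r (Suc k) \<and>
          (\<forall>i<n (Suc k). \<forall>j<n (Suc k). i \<noteq> j \<longrightarrow> G i \<inter> G j = R) \<and>
          R <\<^sub>s G 0 - R \<and>
          (\<forall>i. Suc i < n (Suc k) \<longrightarrow> G i - R <\<^sub>s G (Suc i) - R))"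

definition construction_scheme ::
  "'a::linorder set \<Rightarrow> (nat \<Rightarrow> nat) \<Rightarrow> (nat \<Rightarrow> nat) \<Rightarrow> (nat \<Rightarrow> nat) \<Rightarrow> 'a set set \<Rightarrow> bool" where
  "construction_scheme X m n r F \<longleftrightarrow>
     F \<subseteq> {A. A \<subseteq> X \<and> finite A} \<and>
     (\<forall>A. A \<subseteq> X \<and> finite A \<longrightarrow> (\<exists>B\<in>F. A \<subseteq> B)) \<and>
     (\<forall>k. \<forall>A\<in>level F k. card A = m k) \<and>
     (\<forall>k. \<forall>E\<in>level F k. \<forall>A\<in>level F k. E \<inter> A \<sqsubseteq> E \<and> E \<inter> A \<sqsubseteq> A) \<and>
     (\<forall>k. \<forall>A\<in>level F (Suc k).
        \<exists>G. is_decomposition F k n r A G \<and>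
            (\<forall>G'. is_decomposition F k n r A G' \<longrightarrow> (\<forall>i<n (Suc k). G' i = G i)))"

end

theory Submission
  imports Defs
begin

declare fsrank.simps[simp del]

definition pos :: "'a::linorder set \<Rightarrow> 'a \<Rightarrow> nat" where
  "pos A x = card {y\<in>A. y < x}"

lemma pos_mono:
  assumes "finite A" "x \<in> A" "y \<in> A" "x < y"
  shows "pos A x < pos A y"
  unfolding pos_def
  by (rule psubset_card_mono) (use assms in auto)

lemma pos_less_iff:
  assumes "finite A" "x \<in> A" "y \<in> A"
  shows "pos A x < pos A y \<longleftrightarrow> x < y"
proof
  assume h: "pos A x < pos A y"
  show "x < y"
  proof (rule ccontr)
    assume "\<not> x < y"
    then have "y < x \<or> y = x" by auto
    then show False using pos_mono[OF assms(1,3,2)] h by auto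
  qed
next
  assume "x < y"
  then show "pos A x < pos A y" using pos_mono[OF assms] by simp
qed

lemma pos_lt_card:
  assumes "finite A" "x \<in> A"
  shows "pos A x < card A"
  unfolding pos_def
  by (rule psubset_card_mono) (use assms in auto)

lemma pos_inj:
  assumes "finite A"
  shows "inj_on (pos A) A"
proof (rule inj_onI)
  fix x y assume xy: "x \<in> A" "y \<in> A" "pos A x = pos A y"
  show "x = y"
  proof (cases x y rule: linorder_cases)
    case less then show ?thesis using pos_mono[OF assms xy(1,2)] xy(3) by simp
  next
    case greater then show ?thesis using pos_mono[OF assms xy(2,1)] xy(3) by simp
  qed
qed

lemma pos_image:
  assumes "finite A"
  shows "pos A ` A = {..<card A}"
proof (rule card_subset_eq)
  show "pos A ` A \<subseteq> {..<card A}" using pos_lt_card[OF assms] by auto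
  show "card (pos A ` A) = card {..<card A}"
    using card_image[OF pos_inj[OF assms]] by simp
qed simp

lemma card_pos_filter:
  assumes "finite A"
  shows "card {x\<in>A. P (pos A x)} = card {p. p < card A \<and> P p}"
proof -
  have e: "pos A ` {x\<in>A. P (pos A x)} = {p. p < card A \<and> P p}"
    using pos_image[OF assms] by (auto simp: image_iff)
  have i: "inj_on (pos A) {x\<in>A. P (pos A x)}"
    using pos_inj[OF assms] by (rule inj_on_subset) auto
  show ?thesis using card_image[OF i] unfolding e by simp
qed

lemma pos_init:
  assumes "I \<sqsubseteq> A" "x \<in> I"
  shows "pos A x = pos I x"
proof -
  have "{y\<in>A. y < x} = {y\<in>I. y < x}" using assms unfolding init_seg_def by auto
  then show ?thesis unfolding pos_def by simp
qed

definition blk :: "nat \<Rightarrow> nat \<Rightarrow> 'a::linorder set \<Rightarrow> nat \<Rightarrow> 'a set" where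
  "blk r d A i = {x\<in>A. pos A x < r \<or> (r + i*d \<le> pos A x \<and> pos A x < r + Suc i * d)}"

lemma blk_arith:
  assumes "i \<noteq> i'" "r + i*d \<le> (p::nat)" "p < r + Suc i*d" "r + i'*d \<le> p" "p < r + Suc i'*d"
  shows False
proof (cases "i < i'")
  case True
  then have "Suc i * d \<le> i' * d" by (intro mult_le_mono1) simp
  then show ?thesis using assms by linarith
next
  case False
  then have "Suc i' * d \<le> i * d" using assms(1) by (intro mult_le_mono1) simp
  then show ?thesis using assms by linarith
qed

lemma blk_sub: "blk r d A i \<subseteq> A"
  unfolding blk_def by auto

lemma R_sub_blk: "{x\<in>A. pos A x < r} \<subseteq> blk r d A i"
  unfolding blk_def by auto

lemma blk_inter:
  assumes "i \<noteq> j"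
  shows "blk r d A i \<inter> blk r d A j = {x\<in>A. pos A x < r}"
proof
  show "blk r d A i \<inter> blk r d A j \<subseteq> {x\<in>A. pos A x < r}"
  proof
    fix x assume x: "x \<in> blk r d A i \<inter> blk r d A j"
    show "x \<in> {x\<in>A. pos A x < r}"
    proof (rule ccontr)
      assume "x \<notin> {x\<in>A. pos A x < r}"
      then have "r + i*d \<le> pos A x" "pos A x < r + Suc i*d" "r + j*d \<le> pos A x" "pos A x < r + Suc j*d"
        using x unfolding blk_def by auto
      then show False using blk_arith[OF assms] by blast
    qed
  qed
qed (rule Int_greatest; rule R_sub_blk)

lemma blk_card:
  assumes "finite A" "i < N" "r + N*d \<le> card A"
  shows "card (blk r d A i) = r + d"
proof -
  have "Suc i * d \<le> N * d" using assms(2) by (intro mult_le_mono1) simp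
  then have le: "r + Suc i * d \<le> card A" using assms(3) by linarith
  have 1: "card (blk r d A i) = card {p. p < card A \<and> (p < r \<or> (r + i*d \<le> p \<and> p < r + Suc i * d))}"
    unfolding blk_def by (rule card_pos_filter[OF assms(1)])
  have 2: "{p. p < card A \<and> (p < r \<or> (r + i*d \<le> p \<and> p < r + Suc i * d))}
        = {..<r} \<union> {r+i*d..<r + Suc i * d}"
    using le by auto
  have 3: "card ({..<r} \<union> {r+i*d..<r + Suc i * d}) = r + d"
    by (subst card_Un_disjoint) auto
  show ?thesis unfolding 1 2 3 ..
qed

lemma blk_cover:
  assumes "finite A" "card A = r + N*d" "0 < d" "0 < N"
  shows "(\<Union>i<N. blk r d A i) = A"
proof
  show "(\<Union>i<N. blk r d A i) \<subseteq> A" using blk_sub by blast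
  show "A \<subseteq> (\<Union>i<N. blk r d A i)"
  proof
    fix x assume x: "x \<in> A"
    define p where "p = pos A x"
    have p: "p < r + N*d" using pos_lt_card[OF assms(1) x] assms(2) p_def by simp
    show "x \<in> (\<Union>i<N. blk r d A i)"
    proof (cases "p < r")
      case True
      then show ?thesis using x assms(4) unfolding blk_def p_def by auto
    next
      case False
      define i where "i = (p - r) div d"
      have a: "i * d \<le> p - r" unfolding i_def by (simp add: div_times_less_eq_dividend)
      have b1: "p - r = i*d + (p - r) mod d" unfolding i_def by simp
      have b2: "(p - r) mod d < d" using assms(3) by simp
      have b: "p - r < Suc i * d" using b1 b2 by simp
      have "i < N"
      proof (rule ccontr)
        assume "\<not> i < N"
        then have "N * d \<le> i * d" by (intro mult_le_mono1) simp
        then show False using a p False by linarith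
      qed
      moreover have "x \<in> blk r d A i" using a b False x unfolding blk_def p_def by auto
      ultimately show ?thesis by blast
    qed
  qed
qed


lemma set_less_trans:
  assumes "A <\<^sub>s B" "B <\<^sub>s C" "B \<noteq> {}"
  shows "(A::'a::linorder set) <\<^sub>s C"
  using assms unfolding set_less_def by (meson all_not_in_conv less_trans)

lemma forced:
  fixes A :: "'a::linorder set" and G :: "nat \<Rightarrow> 'a set"
  assumes finA: "finite A" and N2: "2 \<le> N" and AU: "A = (\<Union>i<N. G i)"
    and cG: "\<forall>i<N. card (G i) = c" and rc: "r < c" and cR: "card R = r"
    and int: "\<forall>i<N. \<forall>j<N. i \<noteq> j \<longrightarrow> G i \<inter> G j = R"
    and o0: "R <\<^sub>s G 0 - R" and oS: "\<forall>i. Suc i < N \<longrightarrow> G i - R <\<^sub>s G (Suc i) - R"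
  shows "\<forall>i<N. G i = blk r (c - r) A i"
proof -
  define d where "d = c - r"
  define B where "B i = G i - R" for i
  have GA: "G i \<subseteq> A" if "i < N" for i using AU that by auto
  have RG: "R \<subseteq> G i" if "i < N" for i
  proof (cases "i = 0")
    case True
    have "G 0 \<inter> G 1 = R" using int N2 by auto
    then show ?thesis using True by auto
  next
    case False
    have "G i \<inter> G 0 = R" using int N2 False that by auto
    then show ?thesis by auto
  qed
  have finG: "finite (G i)" if "i < N" for i using GA[OF that] finA finite_subset by blast
  have RA: "R \<subseteq> A" using RG[of 0] GA[of 0] N2 by auto
  have finR: "finite R" using RA finA finite_subset by blast
  have finB: "finite (B i)" if "i < N" for i using finG[OF that] unfolding B_def by simp
  have cB: "card (B i) = d" if "i < N" for i
    unfolding B_def d_def using card_Diff_subset[OF finR RG[OF that]] cG that cR by simp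
  have Bne: "B i \<noteq> {}" if "i < N" for i using cB[OF that] rc d_def by auto
  have Bdisj: "B i \<inter> B j = {}" if "i < N" "j < N" "i \<noteq> j" for i j
    using int that unfolding B_def by auto
  have BB: "B a <\<^sub>s B b" if "a < b" "b < N" for a b
    using that
  proof (induction b)
    case 0 then show ?case by simp
  next
    case (Suc b)
    have s: "B b <\<^sub>s B (Suc b)" using oS Suc.prems unfolding B_def by blast
    show ?case
    proof (cases "a = b")
      case True then show ?thesis using s by simp
    next
      case False
      then have "B a <\<^sub>s B b" using Suc by simp
      then show ?thesis using set_less_trans[OF _ s] Bne[of b] Suc.prems by simp
    qed
  qed
  have RB: "R <\<^sub>s B b" if "b < N" for b
    using that
  proof (induction b)
    case 0 then show ?case using o0 unfolding B_def by simp
  next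
    case (Suc b)
    have s: "B b <\<^sub>s B (Suc b)" using oS Suc.prems unfolding B_def by blast
    show ?case using set_less_trans[OF _ s] Bne[of b] Suc by simp
  qed
  have A_eq: "A = R \<union> (\<Union>a<N. B a)"
    using AU RG N2 RA unfolding B_def by auto
  have posR: "pos A x < r" if x: "x \<in> R" for x
  proof -
    have "{y\<in>A. y < x} = {y\<in>R. y < x}"
    proof
      show "{y\<in>A. y < x} \<subseteq> {y\<in>R. y < x}"
      proof
        fix y assume y: "y \<in> {y\<in>A. y < x}"
        show "y \<in> {y\<in>R. y < x}"
        proof (rule ccontr)
          assume "y \<notin> {y\<in>R. y < x}"
          then have "y \<notin> R" using y by auto
          then obtain a where a: "a < N" "y \<in> B a" using y A_eq by auto
          then have "x < y" using RB[OF a(1)] x unfolding set_less_def by auto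
          then show False using y by auto
        qed
      qed
    qed (use RA in auto)
    then have "pos A x = pos R x" unfolding pos_def by simp
    then show ?thesis using pos_lt_card[OF finR x] cR by simp
  qed
  have posB: "r + i*d \<le> pos A x \<and> pos A x < r + Suc i * d" if i: "i < N" and x: "x \<in> B i" for i x
  proof -
    have S: "{y\<in>A. y < x} = (R \<union> (\<Union>a<i. B a)) \<union> {y\<in>B i. y < x}"
    proof
      show "{y\<in>A. y < x} \<subseteq> (R \<union> (\<Union>a<i. B a)) \<union> {y\<in>B i. y < x}"
      proof
        fix y assume y: "y \<in> {y\<in>A. y < x}"
        show "y \<in> (R \<union> (\<Union>a<i. B a)) \<union> {y\<in>B i. y < x}"
        proof (cases "y \<in> R")
          case False
          then obtain a where a: "a < N" "y \<in> B a" using y A_eq by auto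
          have "\<not> i < a"
          proof
            assume "i < a"
            then have "x < y" using BB[OF _ a(1)] x a(2) unfolding set_less_def by auto
            then show False using y by auto
          qed
          then have "a < i \<or> a = i" by auto
          then show ?thesis using a y by auto
        qed simp
      qed
      show "(R \<union> (\<Union>a<i. B a)) \<union> {y\<in>B i. y < x} \<subseteq> {y\<in>A. y < x}"
      proof -
        have "R \<subseteq> {y\<in>A. y < x}" using RB[OF i] x RA unfolding set_less_def by auto
        moreover have "B a \<subseteq> {y\<in>A. y < x}" if "a < i" for a
          using BB[OF that i] x A_eq that i unfolding set_less_def by auto
        moreover have "{y\<in>B i. y < x} \<subseteq> {y\<in>A. y < x}" using A_eq i by auto
        ultimately show ?thesis by blast
      qed
    qed
    have finU: "finite (\<Union>a<i. B a)" using finB i by auto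
    have cU: "card (\<Union>a<i. B a) = i * d"
    proof -
      have "card (\<Union>a<i. B a) = (\<Sum>a<i. card (B a))"
        by (rule card_UN_disjoint) (use finB Bdisj i in auto)
      also have "\<dots> = (\<Sum>a<i. d)" using cB i by (intro sum.cong) auto
      finally show ?thesis by simp
    qed
    have d1: "R \<inter> (\<Union>a<i. B a) = {}" unfolding B_def by auto
    have d2: "(R \<union> (\<Union>a<i. B a)) \<inter> {y\<in>B i. y < x} = {}"
    proof -
      have "R \<inter> B i = {}" by (auto simp: B_def)
      moreover have "B a \<inter> B i = {}" if "a < i" for a using Bdisj[of a i] that i by auto
      ultimately show ?thesis by blast
    qed
    have "pos A x = card (R \<union> (\<Union>a<i. B a)) + card {y\<in>B i. y < x}"
      unfolding pos_def S by (rule card_Un_disjoint) (use finR finU finB i d2 in auto)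
    also have "card (R \<union> (\<Union>a<i. B a)) = r + i * d"
      using card_Un_disjoint[OF finR finU d1] cR cU by simp
    finally have p: "pos A x = r + i * d + pos (B i) x" unfolding pos_def by simp
    have "pos (B i) x < d" using pos_lt_card[OF finB[OF i] x] cB[OF i] by simp
    then show ?thesis using p by simp
  qed
  show ?thesis
  proof (intro allI impI)
    fix i assume i: "i < N"
    show "G i = blk r (c - r) A i"
      unfolding d_def[symmetric]
    proof
      show "G i \<subseteq> blk r d A i"
      proof
        fix x assume x: "x \<in> G i"
        show "x \<in> blk r d A i"
        proof (cases "x \<in> R")
          case True then show ?thesis using posR RA unfolding blk_def by auto
        next
          case False
          then have "x \<in> B i" using x unfolding B_def by auto
          then show ?thesis using posB[OF i] GA[OF i] x unfolding blk_def by auto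
        qed
      qed
      show "blk r d A i \<subseteq> G i"
      proof
        fix x assume x: "x \<in> blk r d A i"
        show "x \<in> G i"
        proof (cases "x \<in> R")
          case True then show ?thesis using RG[OF i] by auto
        next
          case False
          then obtain a where a: "a < N" "x \<in> B a" using x A_eq blk_sub by blast
          have pa: "r + a*d \<le> pos A x" "pos A x < r + Suc a * d" using posB[OF a] by auto
          then have "\<not> pos A x < r" by linarith
          then have pi: "r + i*d \<le> pos A x" "pos A x < r + Suc i * d" using x unfolding blk_def by auto
          have "a = i"
          proof (rule ccontr)
            assume "a \<noteq> i"
            from blk_arith[OF this pa pi] show False .
          qed
          then show ?thesis using a unfolding B_def by auto
        qed
      qed
    qed
  qed
qed


definition Pieces :: "(nat\<Rightarrow>nat) \<Rightarrow> (nat\<Rightarrow>nat) \<Rightarrow> (nat\<Rightarrow>nat) \<Rightarrow> nat \<Rightarrow> 'a::linorder set set \<Rightarrow> 'a set set" where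
  "Pieces m n r k S = {blk (r (Suc k)) (m k - r (Suc k)) A i | A i. A \<in> S \<and> i < n (Suc k)}"

primrec canon :: "(nat\<Rightarrow>nat) \<Rightarrow> (nat\<Rightarrow>nat) \<Rightarrow> (nat\<Rightarrow>nat) \<Rightarrow> 'a::linorder set \<Rightarrow> nat \<Rightarrow> nat \<Rightarrow> 'a set set" where
  "canon m n r X K 0 = {X}"
| "canon m n r X K (Suc d) = Pieces m n r (K - Suc d) (canon m n r X K d)"

locale ctype =
  fixes m n r :: "nat \<Rightarrow> nat"
  assumes T: "is_type m n r"
begin

lemma m0: "m 0 = 1" using T unfolding is_type_def by simp
lemma n2: "2 \<le> n (Suc k)" using T unfolding is_type_def by simp
lemma rlt: "r (Suc k) < m k" using T unfolding is_type_def by simp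
lemma mS: "m (Suc k) = r (Suc k) + (m k - r (Suc k)) * n (Suc k)" using T unfolding is_type_def by simp

lemma m_less_Suc: "m k < m (Suc k)"
proof -
  have "(m k - r (Suc k)) * 2 \<le> (m k - r (Suc k)) * n (Suc k)" using n2 by (intro mult_le_mono2)
  then show ?thesis using mS[of k] rlt[of k] by linarith
qed

lemma sm: "strict_mono m"
  using m_less_Suc by (simp add: strict_mono_Suc_iff)

lemma m_less_iff: "m a < m b \<longleftrightarrow> a < b"
  using sm by (simp add: strict_mono_less)

lemma m_eq_iff: "m a = m b \<longleftrightarrow> a = b"
  using sm by (simp add: strict_mono_eq)

lemma m_pos: "1 \<le> m k"
  using m0 m_less_iff[of 0 k] by (cases k) auto

abbreviation pc :: "nat \<Rightarrow> 'a::linorder set \<Rightarrow> nat \<Rightarrow> 'a set" where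
  "pc k A i \<equiv> blk (r (Suc k)) (m k - r (Suc k)) A i"

lemma card_eq: "m (Suc k) = r (Suc k) + n (Suc k) * (m k - r (Suc k))"
  using mS[of k] by (simp add: mult.commute)

lemma pc_card:
  assumes "finite A" "card A = m (Suc k)" "i < n (Suc k)"
  shows "card (pc k A i) = m k"
  using blk_card[OF assms(1,3)] assms(2) card_eq[of k] rlt[of k] by simp

lemma pc_cover:
  assumes "finite A" "card A = m (Suc k)"
  shows "(\<Union>i<n (Suc k). pc k A i) = A"
  using blk_cover[OF assms(1)] assms(2) card_eq[of k] rlt[of k] n2[of k] by simp

lemma decomp_unique:
  assumes "is_decomposition F k n r A G" "\<forall>B\<in>level F k. card B = m k" "finite A"
  shows "\<forall>i<n (Suc k). G i = pc k A i"
proof -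
  obtain R where R: "card R = r (Suc k)"
    "\<forall>i<n (Suc k). \<forall>j<n (Suc k). i \<noteq> j \<longrightarrow> G i \<inter> G j = R"
    "R <\<^sub>s G 0 - R" "\<forall>i. Suc i < n (Suc k) \<longrightarrow> G i - R <\<^sub>s G (Suc i) - R"
    using assms(1) unfolding is_decomposition_def by blast
  have A: "A = (\<Union>i<n (Suc k). G i)" using assms(1) unfolding is_decomposition_def by blast
  have c: "\<forall>i<n (Suc k). card (G i) = m k" using assms(1,2) unfolding is_decomposition_def by blast
  show ?thesis
    by (rule forced[OF assms(3) n2 A c rlt R])
qed

end

locale cs = ctype +
  fixes X :: "'a::linorder set" and K :: nat
  assumes finX: "finite X" and cardX: "card X = m K"
begin

abbreviation C :: "nat \<Rightarrow> 'a set set" where "C d \<equiv> canon m n r X K d"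

lemma C_props:
  assumes "d \<le> K"
  shows "(\<forall>A\<in>C d. A \<subseteq> X \<and> card A = m (K - d)) \<and> \<Union>(C d) = X"
  using assms
proof (induction d)
  case 0 then show ?case using cardX by simp
next
  case (Suc d)
  define j where "j = K - Suc d"
  have Sj: "Suc j = K - d" using Suc.prems j_def by simp
  have IH: "\<forall>A\<in>C d. A \<subseteq> X \<and> card A = m (Suc j)" "\<Union>(C d) = X" using Suc Sj by auto
  have CS: "C (Suc d) = Pieces m n r j (C d)" using j_def by simp
  have 1: "\<forall>A\<in>C (Suc d). A \<subseteq> X \<and> card A = m (K - Suc d)"
  proof
    fix E assume "E \<in> C (Suc d)"
    then obtain A i where Ai: "E = pc j A i" "A \<in> C d" "i < n (Suc j)"
      unfolding CS Pieces_def by blast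
    have "finite A" using IH Ai finX finite_subset by metis
    then show "E \<subseteq> X \<and> card E = m (K - Suc d)"
      using pc_card[of A j i] IH Ai blk_sub j_def by blast
  qed
  have "\<Union>(C (Suc d)) = (\<Union>A\<in>C d. \<Union>i<n (Suc j). pc j A i)"
    unfolding CS Pieces_def by blast
  also have "\<dots> = (\<Union>A\<in>C d. A)"
  proof (rule SUP_cong)
    fix A assume "A \<in> C d"
    then show "(\<Union>i<n (Suc j). pc j A i) = A"
      using pc_cover IH finX finite_subset by metis
  qed simp
  finally show ?case using 1 IH by simp
qed

lemma C_fin: "d \<le> K \<Longrightarrow> A \<in> C d \<Longrightarrow> finite A"
  using C_props finX finite_subset by metis

lemma C_card: "d \<le> K \<Longrightarrow> A \<in> C d \<Longrightarrow> card A = m (K - d)"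
  using C_props by blast

definition CF :: "'a set set" where "CF = (\<Union>d\<in>{..K}. C d)"

lemma CF_elem: "A \<in> CF \<Longrightarrow> \<exists>d\<le>K. A \<in> C d"
  unfolding CF_def by auto

lemma C_Suc_pc:
  assumes "Suc k \<le> K" "A \<in> C (K - Suc k)" "i < n (Suc k)"
  shows "pc k A i \<in> C (K - k)"
proof -
  have e: "K - k = Suc (K - Suc k)" using assms(1) by simp
  have "K - Suc (K - Suc k) = k" using assms(1) by simp
  then show ?thesis unfolding e using assms(2,3) by (auto simp: Pieces_def)
qed

lemma rank:
  assumes "j \<le> K" "A \<in> C (K - j)"
  shows "fsrank CF A = j"
  using assms
proof (induction j arbitrary: A rule: less_induct)
  case (less j)
  have finA: "finite A" using C_fin[OF _ less.prems(2)] less.prems(1) by simp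
  have cA: "card A = m j" using C_card[OF _ less.prems(2)] less.prems(1) by simp
  define S where "S = (\<lambda>B. Suc (fsrank CF B)) ` {B. B \<in> CF \<and> B \<subset> A}"
  have eq: "fsrank CF A = Sup S"
    unfolding S_def by (subst fsrank.simps) (simp add: finA)
  have bound: "x \<le> j" "x < Suc j" "0 < x" if "x \<in> S" for x
  proof -
    obtain B where B: "B \<in> CF" "B \<subset> A" "x = Suc (fsrank CF B)" using \<open>x \<in> S\<close> unfolding S_def by blast
    obtain d' where d': "d' \<le> K" "B \<in> C d'" using CF_elem[OF B(1)] by blast
    have "card B < card A" using psubset_card_mono[OF finA B(2)] .
    then have "m (K - d') < m j" using C_card[OF d'] cA by simp
    then have lt: "K - d' < j" using m_less_iff by simp
    have "B \<in> C (K - (K - d'))" using d' by simp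
    then have "fsrank CF B = K - d'" using less.IH[OF lt] lt less.prems(1) by simp
    then show "x \<le> j" "x < Suc j" "0 < x" using B(3) lt by auto
  qed
  show ?case
  proof (cases j)
    case 0
    then have "S = {}" using bound by fastforce
    then show ?thesis using eq 0 by simp
  next
    case (Suc j')
    define B0 where "B0 = pc j' A 0"
    have B0C: "B0 \<in> C (K - j')"
      unfolding B0_def using C_Suc_pc[of j' A 0] less.prems Suc n2[of j'] by simp
    have B0CF: "B0 \<in> CF" unfolding CF_def using B0C by auto
    have cB0: "card B0 = m j'" using pc_card[OF finA] cA Suc n2[of j'] unfolding B0_def by simp
    have "B0 \<subset> A"
    proof -
      have "B0 \<subseteq> A" unfolding B0_def by (rule blk_sub)
      moreover have "B0 \<noteq> A" using cB0 cA Suc m_less_Suc[of j'] by auto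
      ultimately show ?thesis by blast
    qed
    moreover have "fsrank CF B0 = j'"
      using less.IH[of j' B0] Suc less.prems B0C by simp
    ultimately have "j \<in> S" unfolding S_def using B0CF Suc by blast
    then have "Sup S = j" using bound by (intro cSup_eq_maximum) auto
    then show ?thesis using eq by simp
  qed
qed

lemma level_CF: "level CF j = (if j \<le> K then C (K - j) else {})"
proof (cases "j \<le> K")
  case True
  show ?thesis
  proof -
    have "level CF j = C (K - j)"
    proof
      show "level CF j \<subseteq> C (K - j)"
      proof
        fix A assume "A \<in> level CF j"
        then have A: "A \<in> CF" "fsrank CF A = j" unfolding level_def by auto
        obtain d where d: "d \<le> K" "A \<in> C d" using CF_elem[OF A(1)] by blast
        have "fsrank CF A = K - d" using rank[of "K - d" A] d by simp
        then have "d = K - j" using A(2) d(1) by simp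
        then show "A \<in> C (K - j)" using d by simp
      qed
      show "C (K - j) \<subseteq> level CF j"
      proof
        fix A assume A: "A \<in> C (K - j)"
        then have "A \<in> CF" unfolding CF_def by auto
        then show "A \<in> level CF j" using rank[OF True A] unfolding level_def by simp
      qed
    qed
    then show ?thesis using True by simp
  qed
next
  case False
  have "level CF j = {}"
  proof (rule ccontr)
    assume "level CF j \<noteq> {}"
    then obtain A where A: "A \<in> CF" "fsrank CF A = j" unfolding level_def by auto
    obtain d where d: "d \<le> K" "A \<in> C d" using CF_elem[OF A(1)] by blast
    have "fsrank CF A = K - d" using rank[of "K - d" A] d by simp
    then show False using A(2) False by simp
  qed
  then show ?thesis using False by simp
qed

lemma coh:
  assumes "d \<le> K" "E \<in> C d" "A \<in> C d"
  shows "E \<inter> A \<sqsubseteq> E"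
  using assms
proof (induction d arbitrary: E A)
  case 0 then show ?case unfolding init_seg_def by simp
next
  case (Suc d)
  define j where "j = K - Suc d"
  have CS: "C (Suc d) = Pieces m n r j (C d)" using j_def by simp
  obtain E' i where E: "E = pc j E' i" "E' \<in> C d" "i < n (Suc j)"
    using Suc.prems(2) unfolding CS Pieces_def by blast
  obtain A' i' where A: "A = pc j A' i'" "A' \<in> C d" "i' < n (Suc j)"
    using Suc.prems(3) unfolding CS Pieces_def by blast
  have I1: "E' \<inter> A' \<sqsubseteq> E'" using Suc.IH[of E' A'] Suc.prems E A by simp
  have I2: "E' \<inter> A' \<sqsubseteq> A'" using Suc.IH[of A' E'] Suc.prems E A by (simp add: Int_commute)
  have finE': "finite E'" using C_fin[of d E'] Suc.prems E by simp
  define rr where "rr = r (Suc j)"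
  define dd where "dd = m j - r (Suc j)"
  show ?case
    unfolding init_seg_def
  proof (intro conjI ballI impI)
    show "E \<inter> A \<subseteq> E" by blast
    fix b a assume b: "b \<in> E" and a: "a \<in> E \<inter> A" and ba: "b < a"
    have aI: "a \<in> E' \<inter> A'" using a E A blk_sub by blast
    have bE': "b \<in> E'" using b E blk_sub by blast
    have bI: "b \<in> E' \<inter> A'" using I1 aI bE' ba unfolding init_seg_def by blast
    have pa: "pos E' a = pos A' a" using pos_init[OF I1 aI] pos_init[OF I2 aI] by simp
    have pb: "pos E' b = pos A' b" using pos_init[OF I1 bI] pos_init[OF I2 bI] by simp
    have pab: "pos E' b < pos E' a" using pos_mono[OF finE' bE' _ ba] aI by blast
    have bP: "pos E' b < rr \<or> (rr + i*dd \<le> pos E' b \<and> pos E' b < rr + Suc i * dd)"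
      using b E unfolding blk_def rr_def dd_def by blast
    have aP: "pos E' a < rr \<or> (rr + i*dd \<le> pos E' a \<and> pos E' a < rr + Suc i * dd)"
      using a E unfolding blk_def rr_def dd_def by blast
    have aP': "pos A' a < rr \<or> (rr + i'*dd \<le> pos A' a \<and> pos A' a < rr + Suc i' * dd)"
      using a A unfolding blk_def rr_def dd_def by blast
    have "pos A' b < rr \<or> (rr + i'*dd \<le> pos A' b \<and> pos A' b < rr + Suc i' * dd)"
    proof (cases "i = i'")
      case True then show ?thesis using bP pb by simp
    next
      case False
      have "pos E' a < rr"
      proof (rule ccontr)
        assume "\<not> pos E' a < rr"
        then have "rr + i*dd \<le> pos E' a" "pos E' a < rr + Suc i * dd"
          "rr + i'*dd \<le> pos E' a" "pos E' a < rr + Suc i' * dd" using aP aP' pa by auto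
        then show False using blk_arith[OF False] by blast
      qed
      then show ?thesis using pab pb by simp
    qed
    then have "b \<in> A" using A bI unfolding blk_def rr_def dd_def by blast
    then show "b \<in> E \<inter> A" using b by blast
  qed
qed

lemma decomposition:
  assumes "Suc k \<le> K" "A \<in> C (K - Suc k)"
  shows "is_decomposition CF k n r A (pc k A)"
proof -
  have finA: "finite A" using C_fin[OF _ assms(2)] assms(1) by simp
  have cA: "card A = m (Suc k)" using C_card[OF _ assms(2)] assms(1) by simp
  define rr where "rr = r (Suc k)"
  define dd where "dd = m k - r (Suc k)"
  define R where "R = {x\<in>A. pos A x < rr}"
  have lev: "pc k A i \<in> level CF k" if "i < n (Suc k)" for i
    using C_Suc_pc[OF assms that] level_CF[of k] assms(1) by simp
  have cover: "A = (\<Union>i<n (Suc k). pc k A i)" using pc_cover[OF finA cA] by simp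
  have cR: "card R = rr"
  proof -
    have "card R = card {p. p < card A \<and> p < rr}" unfolding R_def by (rule card_pos_filter[OF finA])
    also have "{p. p < card A \<and> p < rr} = {..<rr}"
      using cA rlt[of k] m_less_Suc[of k] unfolding rr_def by auto
    finally show ?thesis by simp
  qed
  have ints: "\<forall>i<n (Suc k). \<forall>j<n (Suc k). i \<noteq> j \<longrightarrow> pc k A i \<inter> pc k A j = R"
    unfolding R_def rr_def using blk_inter by blast
  have o0: "R <\<^sub>s pc k A 0 - R"
    unfolding set_less_def
  proof (intro ballI)
    fix x y assume x: "x \<in> R" and y: "y \<in> pc k A 0 - R"
    have "pos A x < pos A y" using x y unfolding R_def blk_def rr_def by auto
    then show "x < y" using pos_less_iff[OF finA] x y blk_sub unfolding R_def by blast
  qed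
  have oS: "\<forall>i. Suc i < n (Suc k) \<longrightarrow> pc k A i - R <\<^sub>s pc k A (Suc i) - R"
  proof (intro allI impI)
    fix i assume "Suc i < n (Suc k)"
    show "pc k A i - R <\<^sub>s pc k A (Suc i) - R"
      unfolding set_less_def
    proof (intro ballI)
      fix x y assume x: "x \<in> pc k A i - R" and y: "y \<in> pc k A (Suc i) - R"
      have "pos A x < rr + Suc i * dd" using x unfolding R_def blk_def rr_def dd_def by auto
      moreover have "rr + Suc i * dd \<le> pos A y" using y unfolding R_def blk_def rr_def dd_def by auto
      ultimately have "pos A x < pos A y" by linarith
      then show "x < y" using pos_less_iff[OF finA] x y blk_sub by blast
    qed
  qed
  have cR': "card R = r (Suc k)" using cR rr_def by simp
  show ?thesis
    unfolding is_decomposition_def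
  proof (intro conjI)
    show "\<forall>i<n (Suc k). pc k A i \<in> level CF k" using lev by blast
    show "\<exists>R. card R = r (Suc k) \<and>
          (\<forall>i<n (Suc k). \<forall>j<n (Suc k). i \<noteq> j \<longrightarrow> pc k A i \<inter> pc k A j = R) \<and>
          R <\<^sub>s pc k A 0 - R \<and>
          (\<forall>i. Suc i < n (Suc k) \<longrightarrow> pc k A i - R <\<^sub>s pc k A (Suc i) - R)"
      by (rule exI[of _ R], intro conjI) (fact cR' ints o0 oS)+
  qed (fact cover)
qed

theorem CF_scheme: "construction_scheme X m n r CF"
proof -
  have 1: "CF \<subseteq> {A. A \<subseteq> X \<and> finite A}"
    unfolding CF_def using C_props C_fin by auto
  have XCF: "X \<in> CF" unfolding CF_def by force
  have 3: "\<forall>k. \<forall>A\<in>level CF k. card A = m k"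
  proof (intro allI ballI)
    fix k A assume "A \<in> level CF k"
    then have "k \<le> K" "A \<in> C (K - k)" using level_CF[of k] by (auto split: if_splits)
    then show "card A = m k" using C_card[of "K - k" A] by simp
  qed
  have 4: "\<forall>k. \<forall>E\<in>level CF k. \<forall>A\<in>level CF k. E \<inter> A \<sqsubseteq> E \<and> E \<inter> A \<sqsubseteq> A"
  proof (intro allI ballI)
    fix k E A assume E: "E \<in> level CF k" and A: "A \<in> level CF k"
    then have "k \<le> K" "E \<in> C (K - k)" "A \<in> C (K - k)" using level_CF[of k] by (auto split: if_splits)
    then show "E \<inter> A \<sqsubseteq> E \<and> E \<inter> A \<sqsubseteq> A"
      using coh[of "K - k" E A] coh[of "K - k" A E] by (simp add: Int_commute)
  qed
  have 5: "\<forall>k. \<forall>A\<in>level CF (Suc k). \<exists>G. is_decomposition CF k n r A G \<and>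
            (\<forall>G'. is_decomposition CF k n r A G' \<longrightarrow> (\<forall>i<n (Suc k). G' i = G i))"
  proof (intro allI ballI)
    fix k A assume "A \<in> level CF (Suc k)"
    then have k: "Suc k \<le> K" "A \<in> C (K - Suc k)" using level_CF[of "Suc k"] by (auto split: if_splits)
    have finA: "finite A" using C_fin[OF _ k(2)] k(1) by simp
    have l3: "\<forall>B\<in>level CF k. card B = m k" using 3 by blast
    have u: "\<forall>G'. is_decomposition CF k n r A G' \<longrightarrow> (\<forall>i<n (Suc k). G' i = pc k A i)"
      using decomp_unique[OF _ l3 finA] by blast
    show "\<exists>G. is_decomposition CF k n r A G \<and>
            (\<forall>G'. is_decomposition CF k n r A G' \<longrightarrow> (\<forall>i<n (Suc k). G' i = G i))"
      using decomposition[OF k] u by blast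
  qed
  have 2: "\<forall>A. A \<subseteq> X \<and> finite A \<longrightarrow> (\<exists>B\<in>CF. A \<subseteq> B)" using XCF by blast
  show ?thesis unfolding construction_scheme_def by (intro conjI) (fact 1 2 3 4 5)+
qed

theorem scheme_unique:
  assumes S: "construction_scheme X m n r F"
  shows "F = CF"
proof -
  note Sc = S[unfolded construction_scheme_def]
  have Fsub: "F \<subseteq> {A. A \<subseteq> X \<and> finite A}" using Sc by (rule conjunct1)
  have cov: "\<forall>A. A \<subseteq> X \<and> finite A \<longrightarrow> (\<exists>B\<in>F. A \<subseteq> B)" using Sc by (elim conjE)
  have cardL: "\<forall>k. \<forall>A\<in>level F k. card A = m k" using Sc by (elim conjE)
  have cohL: "\<forall>k. \<forall>E\<in>level F k. \<forall>A\<in>level F k. E \<inter> A \<sqsubseteq> E \<and> E \<inter> A \<sqsubseteq> A"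
    using Sc by (elim conjE)
  have decL0: "\<forall>k. \<forall>A\<in>level F (Suc k).
        \<exists>G. is_decomposition F k n r A G \<and>
            (\<forall>G'. is_decomposition F k n r A G' \<longrightarrow> (\<forall>i<n (Suc k). G' i = G i))"
    using Sc by (elim conjE)
  have decL: "\<forall>k. \<forall>A\<in>level F (Suc k). \<exists>G. is_decomposition F k n r A G"
    using decL0 by blast
  have inlev: "A \<in> level F (fsrank F A)" if "A \<in> F" for A using that unfolding level_def by simp
  have XF: "X \<in> F"
  proof -
    obtain B where B: "B \<in> F" "X \<subseteq> B" using cov finX by blast
    then have "B \<subseteq> X" using Fsub by blast
    then show ?thesis using B by (metis subset_antisym)
  qed
  have levK: "level F K = {X}"
  proof
    show "{X} \<subseteq> level F K"
    proof -
      have "m (fsrank F X) = m K" using cardL inlev[OF XF] cardX by metis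
      then have "fsrank F X = K" using m_eq_iff by simp
      then show ?thesis using inlev[OF XF] by simp
    qed
    show "level F K \<subseteq> {X}"
    proof
      fix A assume A: "A \<in> level F K"
      then have "A \<subseteq> X" "card A = card X" using Fsub cardL cardX unfolding level_def by auto
      then show "A \<in> {X}" using card_subset_eq[OF finX] by simp
    qed
  qed
  have claim: "level F (K - d) = C d" if "d \<le> K" for d
    using that
  proof (induction d)
    case 0 then show ?case using levK by simp
  next
    case (Suc d)
    define j where "j = K - Suc d"
    have Sj: "K - d = Suc j" using Suc.prems j_def by simp
    have IH: "level F (Suc j) = C d" using Suc Sj by simp
    have CS: "C (Suc d) = Pieces m n r j (C d)" using j_def by simp
    have sup: "C (Suc d) \<subseteq> level F j"
    proof
      fix E assume "E \<in> C (Suc d)"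
      then obtain A i where Ai: "E = pc j A i" "A \<in> C d" "i < n (Suc j)"
        unfolding CS Pieces_def by blast
      have AL: "A \<in> level F (Suc j)" using IH Ai by simp
      obtain G where G: "is_decomposition F j n r A G" using decL AL by blast
      have finA: "finite A" using AL Fsub unfolding level_def by auto
      have "G i = pc j A i" using decomp_unique[OF G _ finA] cardL Ai(3) by blast
      then show "E \<in> level F j" using G Ai unfolding is_decomposition_def by auto
    qed
    have "level F j \<subseteq> C (Suc d)"
    proof
      fix E assume E: "E \<in> level F j"
      have EX: "E \<subseteq> X" "finite E" using E Fsub unfolding level_def by auto
      have cE: "card E = m j" using cardL E by blast
      then have "E \<noteq> {}" using m_pos[of j] by auto
      define x where "x = Max E"
      have xE: "x \<in> E" unfolding x_def using EX \<open>E \<noteq> {}\<close> by simp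
      have "\<Union>(C (Suc d)) = X" using C_props[OF Suc.prems] by simp
      then obtain P where P: "P \<in> C (Suc d)" "x \<in> P" using xE EX by blast
      have PL: "P \<in> level F j" using sup P by blast
      have co: "E \<inter> P \<sqsubseteq> E" using cohL E PL by blast
      have "E \<subseteq> P"
      proof
        fix z assume z: "z \<in> E"
        have "z \<le> x" unfolding x_def using EX z by simp
        then show "z \<in> P"
        proof (cases "z = x")
          case False
          then have "z < x" using \<open>z \<le> x\<close> by simp
          then show ?thesis using co z xE P unfolding init_seg_def by blast
        qed (use P in simp)
      qed
      moreover have "finite P" using PL Fsub unfolding level_def by auto
      moreover have "card E = card P" using cE cardL PL by simp
      ultimately have "E = P" using card_subset_eq by blast
      then show "E \<in> C (Suc d)" using P by simp
    qed
    then show ?case using sup Sj j_def by auto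
  qed
  show ?thesis
  proof
    show "F \<subseteq> CF"
    proof
      fix A assume A: "A \<in> F"
      define k where "k = fsrank F A"
      have AL: "A \<in> level F k" using inlev[OF A] k_def by simp
      have "card A \<le> card X" using A Fsub card_mono[OF finX] by blast
      then have "m k \<le> m K" using cardL AL cardX by metis
      then have kK: "k \<le> K" using m_less_iff[of K k] by linarith
      then have "level F k = C (K - k)" using claim[of "K - k"] by simp
      then show "A \<in> CF" using AL unfolding CF_def by auto
    qed
    show "CF \<subseteq> F"
    proof
      fix A assume "A \<in> CF"
      then obtain d where "d \<le> K" "A \<in> C d" using CF_elem by blast
      then have "A \<in> level F (K - d)" using claim by simp
      then show "A \<in> F" unfolding level_def by simp
    qed
  qed
qed

end

lemma scheme_card:
  fixes X :: "'a::linorder set"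
  assumes S: "construction_scheme X m n r F" and finX: "finite X"
  shows "card X = m (fsrank F X)"
proof -
  note Sc = S[unfolded construction_scheme_def]
  have Fsub: "F \<subseteq> {A. A \<subseteq> X \<and> finite A}" using Sc by (rule conjunct1)
  have cov: "\<forall>A. A \<subseteq> X \<and> finite A \<longrightarrow> (\<exists>B\<in>F. A \<subseteq> B)" using Sc by (elim conjE)
  have cardL: "\<forall>k. \<forall>A\<in>level F k. card A = m k" using Sc by (elim conjE)
  have XF: "X \<in> F"
  proof -
    obtain B where B: "B \<in> F" "X \<subseteq> B" using cov finX by blast
    then have "B \<subseteq> X" using Fsub by blast
    then show ?thesis using B by (metis subset_antisym)
  qed
  have "X \<in> level F (fsrank F X)" using XF unfolding level_def by simp
  then show ?thesis using cardL by blast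
qed

theorem mainTheorem18:
  fixes m n r :: "nat \<Rightarrow> nat" and X :: "'a::wellorder set"
  assumes "is_type m n r" and "finite X"
  shows "((\<exists>F. construction_scheme X m n r F) \<longleftrightarrow> (\<exists>k. card X = m k)) \<and>
         (\<forall>F F'. construction_scheme X m n r F \<and> construction_scheme X m n r F' \<longrightarrow> F = F')"
proof (intro conjI iffI allI impI)
  assume "\<exists>F. construction_scheme X m n r F"
  then obtain F where "construction_scheme X m n r F" by blast
  then show "\<exists>k. card X = m k" using scheme_card[OF _ assms(2)] by blast
next
  assume "\<exists>k. card X = m k"
  then obtain K where K: "card X = m K" by blast
  interpret c: cs m n r X K
    by (intro cs.intro ctype.intro cs_axioms.intro) (use assms K in auto)
  show "\<exists>F. construction_scheme X m n r F" using c.CF_scheme by blast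
next
  fix F F' assume FF: "construction_scheme X m n r F \<and> construction_scheme X m n r F'"
  then have K: "card X = m (fsrank F X)" using scheme_card[OF _ assms(2)] by blast
  interpret c: cs m n r X "fsrank F X"
    by (intro cs.intro ctype.intro cs_axioms.intro) (use assms K in auto)
  show "F = F'" using c.scheme_unique FF by blast
qed

end
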